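(* Let $k$ be a field of characteristic zero and $D_2 = k_{+}\{x\}/[x^2]$. Every element of the algebra $D_2[\partial]$ of differential operators over $D_2$ is nilpotent.
   Context: $k\{x\}$ denotes the differential polynomial algebra in one indeterminate: the polynomial algebra $k[x_0,x_1,x_2,\dots]$ (with $x = x_0$) with the $k$-linear derivation satisfying $x_n' = x_{n+1}$. $k_{+}\{x\}$ is its subalgebra (without unity) of differential polynomials with zero constant term; $[x^2]$ is the differential ideal (ideal closed under the derivation) of $k_{+}\{x\}$ generated by $x^2$, and $D_2$ carries the induced derivation $a\mapsto a'$. For a differential algebra $A$, the algebra $A[\partial]$ consists of finite sums $a_n\partial^n+\cdots+a_1\partial+a_0$ with $a_i\in A$, with multiplication determined by associativity and the rule $\partial a = a\partial + a'$ (so $(a\partial^i)(b\partial^j) = \sum_{l=0}^{i}\binom{i}{l} a\, b^{(l)}\partial^{i+j-l}$). *)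

theory Defs
  imports "HOL-Library.Poly_Mapping"
begin

text \<open>The differential polynomial algebra k{x} = k[x_0,x_1,...]: polynomials in countably
many variables, a monomial being a finitely supported exponent vector nat =>0 nat.\<close>
type_synonym 'k dpoly = "(nat \<Rightarrow>\<^sub>0 nat) \<Rightarrow>\<^sub>0 'k"

definition dvar :: "nat \<Rightarrow> 'k::comm_ring_1 dpoly" where
  "dvar n = Poly_Mapping.single (Poly_Mapping.single n 1) 1"

definition dconst :: "'k::comm_ring_1 \<Rightarrow> 'k dpoly" where
  "dconst c = Poly_Mapping.single 0 c"

text \<open>The k-linear derivation with x_n' = x_(n+1) (Leibniz rule applied to each monomial).\<close>
definition dderiv :: "'k::comm_ring_1 dpoly \<Rightarrow> 'k dpoly" where
  "dderiv p = (\<Sum>m::nat \<Rightarrow>\<^sub>0 nat\<in>Poly_Mapping.keys p. \<Sum>i::nat\<in>Poly_Mapping.keys m.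
      Poly_Mapping.single (m - Poly_Mapping.single i (1::nat) + Poly_Mapping.single (Suc i) 1)
        (Poly_Mapping.lookup p m * of_nat (Poly_Mapping.lookup m i)))"

definition kplus :: "'k::comm_ring_1 dpoly set" where
  "kplus = {p. Poly_Mapping.lookup p 0 = 0}"

inductive_set dideal_x2 :: "'k::comm_ring_1 dpoly set" where
  gen: "dvar 0 * dvar 0 \<in> dideal_x2"
| add: "p \<in> dideal_x2 \<Longrightarrow> q \<in> dideal_x2 \<Longrightarrow> p + q \<in> dideal_x2"
| smult: "p \<in> dideal_x2 \<Longrightarrow> dconst c * p \<in> dideal_x2"
| mult: "p \<in> dideal_x2 \<Longrightarrow> r \<in> kplus \<Longrightarrow> r * p \<in> dideal_x2"
| deriv: "p \<in> dideal_x2 \<Longrightarrow> dderiv p \<in> dideal_x2"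

text \<open>Differential operators over D_2 = k_+{x}/[x^2], represented by coefficient
representatives: P i \<in> k_+{x} is a representative of the coefficient of \<partial>^i,
P of finite support.  Two representatives give the same element of D_2[\<partial>] iff all
coefficient differences lie in [x^2].\<close>
definition is_D2_op :: "(nat \<Rightarrow> 'k::comm_ring_1 dpoly) \<Rightarrow> bool" where
  "is_D2_op P \<longleftrightarrow> finite {i. P i \<noteq> 0} \<and> (\<forall>i. P i \<in> kplus)"

text \<open>Product (a \<partial>^i)(b \<partial>^j) = \<Sum>_{l\<le>i} (i choose l) a b^(l) \<partial>^(i+j-l),
computed on representatives (well defined modulo [x^2] since [x^2] is a differential ideal).\<close>
definition op_mult :: "(nat \<Rightarrow> 'k::comm_ring_1 dpoly) \<Rightarrow> (nat \<Rightarrow> 'k dpoly) \<Rightarrow> (nat \<Rightarrow> 'k dpoly)" where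
  "op_mult P Q = (\<lambda>m. \<Sum>i\<in>{i. P i \<noteq> 0}. \<Sum>j\<in>{j. Q j \<noteq> 0}. \<Sum>l\<le>i.
      if i + j - l = m then of_nat (i choose l) * P i * (dderiv ^^ l) (Q j) else 0)"

text \<open>op_pow P n = P^(n+1).\<close>
primrec op_pow :: "(nat \<Rightarrow> 'k::comm_ring_1 dpoly) \<Rightarrow> nat \<Rightarrow> (nat \<Rightarrow> 'k dpoly)" where
  "op_pow P 0 = P"
| "op_pow P (Suc n) = op_mult P (op_pow P n)"

text \<open>An element of D_2[\<partial>] is nilpotent iff some positive power is zero in D_2[\<partial>],
i.e. all coefficients of the power lie in [x^2].\<close>
definition D2_op_nilpotent :: "(nat \<Rightarrow> 'k::comm_ring_1 dpoly) \<Rightarrow> bool" where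
  "D2_op_nilpotent P \<longleftrightarrow> (\<exists>n. \<forall>i. op_pow P n i \<in> dideal_x2)"

end

theory Submission
  imports Defs
begin


abbreviation e :: "nat \<Rightarrow> nat \<Rightarrow>\<^sub>0 nat" where "e j \<equiv> Poly_Mapping.single j 1"

lemma I_zero: "(0::'k::comm_ring_1 dpoly) \<in> dideal_x2"
proof -
  have "dconst 0 * (dvar 0 * dvar 0) \<in> (dideal_x2 :: 'k dpoly set)"
    by (rule dideal_x2.smult[OF dideal_x2.gen])
  thus ?thesis by (simp add: dconst_def)
qed

lemma dconst_mult_single: "dconst c * Poly_Mapping.single m d = Poly_Mapping.single m (c * d)"
  by (simp add: dconst_def mult_single)

lemma dconst_mult: "dconst a * dconst b = dconst (a * b)"
  by (simp add: dconst_def mult_single)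

lemma dconst_one: "dconst 1 = 1"
  by (simp add: dconst_def)

lemma I_neg: "(p::'k::comm_ring_1 dpoly) \<in> dideal_x2 \<Longrightarrow> - p \<in> dideal_x2"
proof -
  assume "p \<in> dideal_x2"
  hence "dconst (-1) * p \<in> dideal_x2" by (rule dideal_x2.smult)
  moreover have "dconst (-1) * p = - p"
    by (simp add: dconst_def single_uminus)
  ultimately show ?thesis by simp
qed

lemma I_diff: "(p::'k::comm_ring_1 dpoly) \<in> dideal_x2 \<Longrightarrow> q \<in> dideal_x2 \<Longrightarrow> p - q \<in> dideal_x2"
  using dideal_x2.add[OF _ I_neg, of p q] by simp

lemma I_sum: "finite S \<Longrightarrow> (\<And>x. x \<in> S \<Longrightarrow> f x \<in> dideal_x2) \<Longrightarrow> sum f S \<in> (dideal_x2::'k::comm_ring_1 dpoly set)"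
  by (induction S rule: finite_induct) (auto intro: I_zero dideal_x2.add)

lemma e_nonzero: "e j \<noteq> 0"
  by (metis lookup_single_eq lookup_zero one_neq_zero)

lemma single_kplus: "m \<noteq> 0 \<Longrightarrow> Poly_Mapping.single m c \<in> kplus"
  by (simp add: kplus_def lookup_single when_def)

lemma dvar_kplus: "dvar j \<in> kplus"
  unfolding dvar_def using e_nonzero by (rule single_kplus)

lemma dderiv_single:
  "dderiv (Poly_Mapping.single m (c::'k::comm_ring_1)) =
    (\<Sum>i\<in>Poly_Mapping.keys m. Poly_Mapping.single (m - e i + e (Suc i)) (c * of_nat (Poly_Mapping.lookup m i)))"
  by (cases "c = 0") (simp_all add: dderiv_def)

lemma sum_monomials: "(p::'k::comm_ring_1 dpoly) = (\<Sum>m\<in>Poly_Mapping.keys p. Poly_Mapping.single m (Poly_Mapping.lookup p m))"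
proof (rule poly_mapping_eqI)
  fix k
  show "Poly_Mapping.lookup p k = Poly_Mapping.lookup (\<Sum>m\<in>Poly_Mapping.keys p. Poly_Mapping.single m (Poly_Mapping.lookup p m)) k"
    by (simp add: lookup_sum lookup_single when_def in_keys_iff)
qed



definition t :: "nat \<Rightarrow> nat \<Rightarrow> nat \<Rightarrow> 'k::comm_ring_1 dpoly" where
  "t i p q = Poly_Mapping.single (Poly_Mapping.single i p + Poly_Mapping.single (Suc i) q) 1"

lemma dderiv_t:
  assumes p: "p \<ge> 1"
  shows "dvar (Suc i) * dderiv (t i p q :: 'k::comm_ring_1 dpoly) =
     dconst (of_nat p) * t i (p-1) (q+2) + dconst (of_nat q) * (dvar (Suc (Suc i)) * t i p q)"
proof -
  define m where "m = Poly_Mapping.single i p + Poly_Mapping.single (Suc i) q"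
  have lm: "Poly_Mapping.lookup m j = (if j = i then p else if j = Suc i then q else 0)" for j
    by (auto simp: m_def lookup_add lookup_single when_def)
  have ks: "Poly_Mapping.keys m \<subseteq> {i, Suc i}"
    using lm by (auto simp: in_keys_iff split: if_splits)
  let ?f = "\<lambda>j. Poly_Mapping.single (m - e j + e (Suc j)) ((1::'k) * of_nat (Poly_Mapping.lookup m j))"
  have "dderiv (t i p q :: 'k dpoly) = (\<Sum>j\<in>Poly_Mapping.keys m. ?f j)"
    unfolding t_def m_def[symmetric] by (rule dderiv_single)
  also have "\<dots> = (\<Sum>j\<in>{i, Suc i}. ?f j)"
    by (rule sum.mono_neutral_left) (use ks in \<open>auto simp: in_keys_iff\<close>)
  also have "\<dots> = ?f i + ?f (Suc i)" by simp
  finally have d: "dderiv (t i p q :: 'k dpoly) = ?f i + ?f (Suc i)" .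
  have m1: "e (Suc i) + (m - e i + e (Suc i)) = Poly_Mapping.single i (p-1) + Poly_Mapping.single (Suc i) (q+2)"
    by (rule poly_mapping_eqI) (use p in \<open>auto simp: lm lookup_add lookup_minus lookup_single when_def\<close>)
  have "dvar (Suc i) * ?f i = Poly_Mapping.single (e (Suc i) + (m - e i + e (Suc i))) (of_nat p)"
    by (simp add: dvar_def mult_single lm)
  also have "\<dots> = dconst (of_nat p) * t i (p-1) (q+2)"
    by (simp only: m1 t_def dconst_mult_single mult_1_right)
  finally have t1: "dvar (Suc i) * ?f i = dconst (of_nat p) * t i (p-1) (q+2)" .
  have t2: "dvar (Suc i) * ?f (Suc i) = dconst (of_nat q) * (dvar (Suc (Suc i)) * (t i p q :: 'k dpoly))"
  proof (cases "q = 0")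
    case True
    then show ?thesis by (simp add: lm dconst_def)
  next
    case False
    have m2: "e (Suc i) + (m - e (Suc i) + e (Suc (Suc i))) = e (Suc (Suc i)) + m"
      by (rule poly_mapping_eqI) (use False in \<open>auto simp: lm lookup_add lookup_minus lookup_single when_def\<close>)
    have "dvar (Suc i) * ?f (Suc i) = Poly_Mapping.single (e (Suc i) + (m - e (Suc i) + e (Suc (Suc i)))) (of_nat q)"
      by (simp add: dvar_def mult_single lm)
    also have "\<dots> = dconst (of_nat q) * (dvar (Suc (Suc i)) * (t i p q :: 'k dpoly))"
      by (simp only: m2 t_def m_def[symmetric] dvar_def mult_single dconst_mult_single mult_1_right)
    finally show ?thesis .
  qed
  show ?thesis unfolding d distrib_left t1 t2 ..
qed

lemma ritt_step:
  assumes p: "p \<ge> 1" and mem: "(t i p q :: 'k::field_char_0 dpoly) \<in> dideal_x2"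
  shows "(t i (p-1) (q+2) :: 'k dpoly) \<in> dideal_x2"
proof -
  have a: "dvar (Suc i) * dderiv (t i p q :: 'k dpoly) \<in> dideal_x2"
    by (rule dideal_x2.mult[OF dideal_x2.deriv[OF mem] dvar_kplus])
  have b: "dconst (of_nat q) * (dvar (Suc (Suc i)) * (t i p q :: 'k dpoly)) \<in> dideal_x2"
    by (rule dideal_x2.smult[OF dideal_x2.mult[OF mem dvar_kplus]])
  have "dconst (of_nat p) * (t i (p-1) (q+2) :: 'k dpoly) \<in> dideal_x2"
    using I_diff[OF a b] unfolding dderiv_t[OF p] by simp
  hence "dconst (1 / of_nat p) * (dconst (of_nat p) * (t i (p-1) (q+2) :: 'k dpoly)) \<in> dideal_x2"
    by (rule dideal_x2.smult)
  moreover have "dconst (1 / of_nat p) * dconst (of_nat p) = (1 :: 'k dpoly)"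
    using p by (simp add: dconst_mult dconst_one)
  ultimately show ?thesis by (simp add: mult.assoc[symmetric])
qed

lemma ritt_iter:
  assumes mem: "(t i m 0 :: 'k::field_char_0 dpoly) \<in> dideal_x2"
  shows "k \<le> m \<Longrightarrow> (t i (m-k) (2*k) :: 'k dpoly) \<in> dideal_x2"
proof (induction k)
  case 0 then show ?case using mem by simp
next
  case (Suc k)
  have "1 \<le> m - k" using Suc.prems by simp
  from ritt_step[OF this Suc.IH] Suc.prems
  have "(t i (m-k-1) (2*k+2) :: 'k dpoly) \<in> dideal_x2" by simp
  moreover have "m - k - 1 = m - Suc k" "2*k+2 = 2 * Suc k" by auto
  ultimately show ?case by simp
qed

definition pw :: "nat \<Rightarrow> nat \<Rightarrow> 'k::comm_ring_1 dpoly" where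
  "pw i E = Poly_Mapping.single (Poly_Mapping.single i E) 1"

lemma pw_mem: "(pw i (2^(Suc i)) :: 'k::field_char_0 dpoly) \<in> dideal_x2"
proof (induction i)
  case 0
  have "dvar 0 * dvar 0 = (pw 0 2 :: 'k dpoly)"
    by (simp add: dvar_def pw_def mult_single single_add[symmetric] numeral_2_eq_2)
  then show ?case using dideal_x2.gen[where 'k='k] by simp
next
  case (Suc i)
  have "(t i (2^Suc i) 0 :: 'k dpoly) \<in> dideal_x2"
    using Suc by (simp add: t_def pw_def)
  from ritt_iter[OF this, of "2^Suc i"] have "(t i 0 (2*2^Suc i) :: 'k dpoly) \<in> dideal_x2" by simp
  then show ?case by (simp add: t_def pw_def)
qed



lemma mono_mem:
  assumes "Poly_Mapping.lookup m i \<ge> 2^(Suc i)"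
  shows "(Poly_Mapping.single m 1 :: 'k::field_char_0 dpoly) \<in> dideal_x2"
proof -
  define E where "E = (2::nat)^(Suc i)"
  define r where "r = m - Poly_Mapping.single i E"
  have mr: "m = r + Poly_Mapping.single i E"
    by (rule poly_mapping_eqI) (use assms in \<open>auto simp: r_def E_def lookup_add lookup_minus lookup_single when_def\<close>)
  have eq: "(Poly_Mapping.single m 1 :: 'k dpoly) = Poly_Mapping.single r 1 * pw i E"
    by (simp add: pw_def mult_single mr)
  have pm: "(pw i E :: 'k dpoly) \<in> dideal_x2" unfolding E_def by (rule pw_mem)
  show ?thesis
  proof (cases "r = 0")
    case True
    then show ?thesis using eq pm by (simp add: pw_def)
  next
    case False
    then show ?thesis unfolding eq by (rule dideal_x2.mult[OF pm single_kplus])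
  qed
qed

lemma poly_mem:
  assumes "\<And>m. m \<in> Poly_Mapping.keys p \<Longrightarrow> \<exists>i. Poly_Mapping.lookup m i \<ge> 2^(Suc i)"
  shows "(p :: 'k::field_char_0 dpoly) \<in> dideal_x2"
proof -
  have "(\<Sum>m\<in>Poly_Mapping.keys p. Poly_Mapping.single m (Poly_Mapping.lookup p m)) \<in> dideal_x2"
  proof (rule I_sum)
    fix m assume "m \<in> Poly_Mapping.keys p"
    then obtain i where "Poly_Mapping.lookup m i \<ge> 2^(Suc i)" using assms by blast
    from dideal_x2.smult[OF mono_mem[OF this], of "Poly_Mapping.lookup p m"]
    show "Poly_Mapping.single m (Poly_Mapping.lookup p m) \<in> dideal_x2"
      by (simp add: dconst_mult_single)
  qed simp
  then show ?thesis using sum_monomials[of p] by simp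
qed



definition lin :: "(nat \<Rightarrow> nat) \<Rightarrow> (nat \<Rightarrow>\<^sub>0 nat) \<Rightarrow> nat" where
  "lin f m = (\<Sum>j\<in>Poly_Mapping.keys m. f j * Poly_Mapping.lookup m j)"

lemma lin_superset: "finite S \<Longrightarrow> Poly_Mapping.keys m \<subseteq> S \<Longrightarrow> lin f m = (\<Sum>j\<in>S. f j * Poly_Mapping.lookup m j)"
  unfolding lin_def by (rule sum.mono_neutral_left) (auto simp: in_keys_iff)

lemma lin_add: "lin f (a + b) = lin f a + lin f b"
proof -
  let ?S = "Poly_Mapping.keys a \<union> Poly_Mapping.keys b"
  have "lin f (a + b) = (\<Sum>j\<in>?S. f j * Poly_Mapping.lookup (a+b) j)"
    by (rule lin_superset) (use keys_add[of a b] in auto)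
  also have "\<dots> = (\<Sum>j\<in>?S. f j * Poly_Mapping.lookup a j) + (\<Sum>j\<in>?S. f j * Poly_Mapping.lookup b j)"
    by (simp add: lookup_add algebra_simps sum.distrib)
  also have "\<dots> = lin f a + lin f b"
    using lin_superset[of ?S a f] lin_superset[of ?S b f] by simp
  finally show ?thesis .
qed

lemma lin_e: "lin f (e j) = f j"
  by (simp add: lin_def)

lemma lin_e': "lin f (Poly_Mapping.single j (Suc 0)) = f j"
  by (simp add: lin_def)

lemma lin_zero: "lin f 0 = 0"
  by (simp add: lin_def)

lemma lin_shift:
  assumes "i \<in> Poly_Mapping.keys m"
  shows "lin f (m - e i + e (Suc i)) + f i = lin f m + f (Suc i)"
proof -
  have mm: "m = (m - e i) + e i"
    by (rule poly_mapping_eqI) (use assms in \<open>auto simp: lookup_add lookup_minus lookup_single when_def in_keys_iff\<close>)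
  have "lin f m = lin f ((m - e i) + e i)" using mm by (rule arg_cong)
  also have "\<dots> = lin f (m - e i) + f i" by (simp only: lin_add lin_e)
  finally have "lin f m = lin f (m - e i) + f i" .
  moreover have "lin f (m - e i + e (Suc i)) = lin f (m - e i) + f (Suc i)"
    by (simp only: lin_add lin_e)
  ultimately show ?thesis by simp
qed

definition bnd :: "nat \<Rightarrow> nat \<Rightarrow> 'k::comm_ring_1 dpoly \<Rightarrow> bool" where
  "bnd d w p \<longleftrightarrow> (\<forall>m\<in>Poly_Mapping.keys p. d \<le> lin (\<lambda>_. 1) m \<and> lin id m \<le> w)"

lemma bnd_zero: "bnd d w 0" by (simp add: bnd_def)

lemma bnd_single: "d \<le> lin (\<lambda>_. 1) k \<Longrightarrow> lin id k \<le> w \<Longrightarrow> bnd d w (Poly_Mapping.single k v)"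
  by (simp add: bnd_def)

lemma bnd_D: "bnd d w p \<Longrightarrow> m \<in> Poly_Mapping.keys p \<Longrightarrow> d \<le> lin (\<lambda>_. 1) m \<and> lin id m \<le> w"
  unfolding bnd_def by blast

lemma bnd_I: "(\<And>m. m \<in> Poly_Mapping.keys p \<Longrightarrow> d \<le> lin (\<lambda>_. 1) m \<and> lin id m \<le> w) \<Longrightarrow> bnd d w p"
  unfolding bnd_def by blast

lemma bnd_mono: "bnd d w p \<Longrightarrow> d' \<le> d \<Longrightarrow> w \<le> w' \<Longrightarrow> bnd d' w' p"
  by (rule bnd_I) (drule (1) bnd_D, linarith)

lemma bnd_sum: "(\<And>x. x \<in> S \<Longrightarrow> bnd d w (f x)) \<Longrightarrow> bnd d w (sum f S)"
proof (rule bnd_I)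
  fix m assume H: "\<And>x. x \<in> S \<Longrightarrow> bnd d w (f x)" and m: "m \<in> Poly_Mapping.keys (sum f S)"
  then obtain x where "x \<in> S" "m \<in> Poly_Mapping.keys (f x)" using keys_sum[of f S] by blast
  then show "d \<le> lin (\<lambda>_. 1) m \<and> lin id m \<le> w" using H bnd_D by blast
qed

lemma bnd_mult:
  assumes A: "bnd d1 w1 a" and B: "bnd d2 w2 b"
  shows "bnd (d1+d2) (w1+w2) (a * b)"
proof (rule bnd_I)
  fix m assume "m \<in> Poly_Mapping.keys (a * b)"
  then obtain x y where xy: "m = x + y" "x \<in> Poly_Mapping.keys a" "y \<in> Poly_Mapping.keys b"
    using keys_mult[of a b] by blast
  have 1: "d1 \<le> lin (\<lambda>_. 1) x \<and> lin id x \<le> w1" by (rule bnd_D[OF A xy(2)])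
  have 2: "d2 \<le> lin (\<lambda>_. 1) y \<and> lin id y \<le> w2" by (rule bnd_D[OF B xy(3)])
  show "d1 + d2 \<le> lin (\<lambda>_. 1) m \<and> lin id m \<le> w1 + w2"
    using 1 2 unfolding xy(1) lin_add by linarith
qed

lemma bnd_of_nat: "bnd 0 0 (of_nat c :: 'k::comm_ring_1 dpoly)"
proof (rule bnd_I)
  fix m assume "m \<in> Poly_Mapping.keys (of_nat c :: 'k dpoly)"
  hence "m = 0" by (simp add: in_keys_iff lookup_of_nat when_def split: if_splits)
  thus "0 \<le> lin (\<lambda>_. 1) m \<and> lin id m \<le> 0" by (simp add: lin_zero)
qed

lemma bnd_dderiv_single:
  assumes b: "bnd d w p" and m: "m \<in> Poly_Mapping.keys p" and i: "i \<in> Poly_Mapping.keys m"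
  shows "bnd d (Suc w) (Poly_Mapping.single (m - e i + e (Suc i)) v)"
proof -
  have l1: "lin (\<lambda>_. 1) (m - e i + e (Suc i)) = lin (\<lambda>_. 1) m"
    using lin_shift[OF i, of "\<lambda>_. 1"] by simp
  have l2: "lin id (m - e i + e (Suc i)) = Suc (lin id m)"
    using lin_shift[OF i, of id] by simp
  have hm: "d \<le> lin (\<lambda>_. 1) m \<and> lin id m \<le> w" by (rule bnd_D[OF b m])
  have c1: "d \<le> lin (\<lambda>_. 1) (m - e i + e (Suc i))" using hm l1 by linarith
  have c2: "lin id (m - e i + e (Suc i)) \<le> Suc w" using hm l2 by linarith
  show ?thesis by (rule bnd_single[OF c1 c2])
qed

lemma bnd_dderiv: 
  assumes b: "bnd d w p" shows "bnd d (Suc w) (dderiv p)"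
  unfolding dderiv_def
  by (rule bnd_sum, rule bnd_sum, rule bnd_dderiv_single[OF b]) 

lemma bnd_funpow: "bnd d w p \<Longrightarrow> bnd d (w + l) ((dderiv ^^ l) p)"
  by (induction l) (simp_all add: bnd_dderiv)



lemma bnd_op_mult:
  assumes PB: "\<And>i. bnd 1 W (P i)" and PN: "\<And>i. P i \<noteq> 0 \<Longrightarrow> i \<le> N"
    and QB: "\<And>j. bnd d w (Q j)"
  shows "bnd (Suc d) (W + N + w) (op_mult P Q m)"
  unfolding op_mult_def
proof (intro bnd_sum)
  fix i j l assume i: "i \<in> {i. P i \<noteq> 0}" and l: "l \<in> {..i}"
  have b: "bnd (0 + 1 + d) (0 + W + (w + l)) (of_nat (i choose l) * P i * (dderiv ^^ l) (Q j))"
    by (rule bnd_mult[OF bnd_mult[OF bnd_of_nat PB] bnd_funpow[OF QB]])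
  have lN: "l \<le> N" using i l PN by fastforce
  have "bnd (Suc d) (W + N + w) (of_nat (i choose l) * P i * (dderiv ^^ l) (Q j))"
    by (rule bnd_mono[OF b]) (use lN in auto)
  then show "bnd (Suc d) (W + N + w) (if i + j - l = m then of_nat (i choose l) * P i * (dderiv ^^ l) (Q j) else 0)"
    by (simp add: bnd_zero)
qed

lemma bnd_op_pow:
  assumes PB: "\<And>i. bnd 1 W (P i)" and PN: "\<And>i. P i \<noteq> 0 \<Longrightarrow> i \<le> N"
  shows "bnd (Suc n) (Suc n * (W + N)) (op_pow P n i)"
proof (induction n arbitrary: i)
  case 0
  show ?case using bnd_mono[OF PB[of i], of "Suc 0" "Suc 0 * (W+N)"] by simp
next
  case (Suc n)
  have "bnd (Suc (Suc n)) (W + N + Suc n * (W + N)) (op_pow P (Suc n) i)"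
    unfolding op_pow.simps by (rule bnd_op_mult[OF PB PN Suc.IH])
  then show ?case by simp
qed

lemma pigeon:
  fixes C :: nat
  assumes K: "lin (\<lambda>_. 1) m \<ge> (2*C+1) * ((2*C+1) * 2^(Suc (2*C))) + 1"
    and W: "lin id m \<le> C * lin (\<lambda>_. 1) m"
  shows "\<exists>i. Poly_Mapping.lookup m i \<ge> 2^(Suc i)"
proof (rule ccontr)
  assume "\<not> ?thesis"
  hence lt: "\<And>i. Poly_Mapping.lookup m i < 2^(Suc i)" by (simp add: not_le)
  define M where "M = 2*C"
  define E where "E = (2::nat)^(Suc M)"
  define Ks where "Ks = Poly_Mapping.keys m"
  define A where "A = {j\<in>Ks. j \<le> M}"
  define B where "B = {j\<in>Ks. \<not> j \<le> M}"
  define D where "D = lin (\<lambda>_. 1) m"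
  define SA where "SA = (\<Sum>j\<in>A. Poly_Mapping.lookup m j)"
  define SB where "SB = (\<Sum>j\<in>B. Poly_Mapping.lookup m j)"
  have fin: "finite Ks" by (simp add: Ks_def)
  have "D = (\<Sum>j\<in>Ks. Poly_Mapping.lookup m j)" by (simp add: D_def lin_def Ks_def)
  also have "\<dots> = SA + SB"
  proof -
    have "Ks = A \<union> B" "A \<inter> B = {}" "finite A" "finite B" using fin by (auto simp: A_def B_def)
    thus ?thesis unfolding SA_def SB_def by (simp add: sum.union_disjoint)
  qed
  finally have DS: "D = SA + SB" .
  have "SA \<le> (\<Sum>j\<in>A. E)" unfolding SA_def
  proof (rule sum_mono)
    fix j assume "j \<in> A"
    hence "j \<le> M" by (simp add: A_def)
    hence "(2::nat)^(Suc j) \<le> E" unfolding E_def by (intro power_increasing) auto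
    thus "Poly_Mapping.lookup m j \<le> E" using lt[of j] by linarith
  qed
  also have "\<dots> = card A * E" by simp
  also have "\<dots> \<le> (M+1) * E"
  proof -
    have "A \<subseteq> {..M}" by (auto simp: A_def)
    hence "card A \<le> card {..M}" by (intro card_mono) auto
    hence "card A \<le> M + 1" by simp
    thus ?thesis by (rule mult_right_mono) simp
  qed
  finally have SA: "SA \<le> (M+1) * E" .
  have "(M+1) * SB = (\<Sum>j\<in>B. (M+1) * Poly_Mapping.lookup m j)" by (simp add: SB_def sum_distrib_left)
  also have "\<dots> \<le> (\<Sum>j\<in>B. id j * Poly_Mapping.lookup m j)"
  proof (rule sum_mono)
    fix j assume "j \<in> B"
    hence "M + 1 \<le> id j" by (simp add: B_def)
    thus "(M+1) * Poly_Mapping.lookup m j \<le> id j * Poly_Mapping.lookup m j" by (rule mult_right_mono) simp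
  qed
  also have "\<dots> \<le> (\<Sum>j\<in>Ks. id j * Poly_Mapping.lookup m j)"
    by (rule sum_mono2) (use fin in \<open>auto simp: B_def\<close>)
  also have "\<dots> = lin id m" by (simp add: lin_def Ks_def)
  finally have SB: "(M+1) * SB \<le> C * D" using W unfolding D_def by (rule order.trans)
  have "(M+1) * D = (M+1) * SA + (M+1) * SB" by (simp add: DS distrib_left)
  moreover have "(M+1) * SA \<le> (M+1) * ((M+1) * E)" using SA by (rule mult_left_mono) simp
  moreover have "(M+1) * D = 2 * (C * D) + D" by (simp add: M_def algebra_simps)
  moreover have "D \<ge> (M+1) * ((M+1) * E) + 1" using K by (simp add: D_def M_def E_def)
  ultimately show False using SB by linarith
qed



theorem mainTheorem7:
  fixes P :: "nat \<Rightarrow> 'k::field_char_0 dpoly"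
  assumes "is_D2_op P"
  shows "D2_op_nilpotent P"
proof -
  define S where "S = {i. P i \<noteq> 0}"
  have finS: "finite S" and kp: "\<And>i. P i \<in> kplus" using assms by (auto simp: is_D2_op_def S_def)
  have "\<exists>N. \<forall>i\<in>S. i \<le> N" using finS by (simp add: finite_nat_set_iff_bounded_le)
  then obtain N where N: "\<And>i. i \<in> S \<Longrightarrow> i \<le> N" by blast
  define T where "T = (\<Union>i\<in>S. Poly_Mapping.keys (P i))"
  have "finite (lin id ` T)" using finS by (simp add: T_def)
  hence "\<exists>W. \<forall>x\<in>lin id ` T. x \<le> W" by (simp only: finite_nat_set_iff_bounded_le)
  then obtain W where W: "\<And>m. m \<in> T \<Longrightarrow> lin id m \<le> W" by blast
  have PN: "\<And>i. P i \<noteq> 0 \<Longrightarrow> i \<le> N" using N by (simp add: S_def)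
  have PB: "bnd 1 W (P i)" for i
  proof (cases "i \<in> S")
    case False
    then show ?thesis by (simp add: S_def bnd_zero)
  next
    case True
    show ?thesis
    proof (rule bnd_I)
      fix m assume m: "m \<in> Poly_Mapping.keys (P i)"
      have "m \<noteq> 0" using m kp[of i] by (auto simp: kplus_def in_keys_iff)
      then obtain j where j: "j \<in> Poly_Mapping.keys m"
        by (metis all_not_in_conv keys_eq_empty)
      have "Poly_Mapping.lookup m j \<le> (\<Sum>j\<in>Poly_Mapping.keys m. Poly_Mapping.lookup m j)"
        by (rule member_le_sum) (use j in auto)
      moreover have "Poly_Mapping.lookup m j \<ge> 1" using j by (simp add: in_keys_iff)
      ultimately have "1 \<le> lin (\<lambda>_. 1) m" by (simp add: lin_def)
      moreover have "lin id m \<le> W" using W True m by (auto simp: T_def)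
      ultimately show "1 \<le> lin (\<lambda>_. 1) m \<and> lin id m \<le> W" by simp
    qed
  qed
  define C where "C = W + N"
  define K where "K = (2*C+1) * ((2*C+1) * 2^(Suc (2*C))) + (1::nat)"
  define n where "n = K - 1"
  have Kn: "Suc n = K" by (simp add: n_def K_def)
  have "op_pow P n i \<in> dideal_x2" for i
  proof (rule poly_mem)
    fix m assume m: "m \<in> Poly_Mapping.keys (op_pow P n i)"
    have h: "K \<le> lin (\<lambda>_. 1) m \<and> lin id m \<le> K * C"
      using bnd_D[OF bnd_op_pow[where n=n and i=i, OF PB PN] m] unfolding Kn C_def .
    have h2: "K * C \<le> lin (\<lambda>_. 1) m * C"
      using h by (intro mult_right_mono) auto
    have h3: "lin id m \<le> lin (\<lambda>_. 1) m * C" using h h2 by linarith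
    have "lin (\<lambda>_. 1) m \<ge> K" "lin id m \<le> C * lin (\<lambda>_. 1) m"
      using h h3 by (simp_all only: mult.commute)
    then show "\<exists>i. Poly_Mapping.lookup m i \<ge> 2^(Suc i)"
      by (intro pigeon[of C]) (simp_all add: K_def)
  qed
  then show ?thesis unfolding D2_op_nilpotent_def by blast
qed

end
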